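(* Let $0\le i\le m-1$, let $u\in I_i$, and let $j\ge m-i$. Then $$\mathrm{ord}_p\big(p^j\gamma_{i,j}\big)-\frac{\deg(p^ju)}{p-1}\ \ge\ p^{\,j-(m-i)+1}-1.$$
   Context: Let $p$ be a prime, $q=p^a$, and let $W_m$ be the Witt vectors of length $m$. Write $f\in W_m(\mathbb{F}_q[x_1^{\pm1},\dots,x_n^{\pm1}])$ uniquely as $f=\sum_{i=0}^{m-1}\sum_{u\in I_i}\lambda_i(a_{iu}x^u)$, where $\lambda_i$ places an element in the $i$-th Witt coordinate and zeros elsewhere, $I_i\subset\mathbb{Z}^n$ is finite and $a_{iu}\in\mathbb{F}_q^\times$. Let $\Delta$ be the convex hull of $\{p^{m-i-1}u:u\in I_i\}\cup\{0\}$, assumed $n$-dimensional, and let $\deg(u)=\min\{c\ge0:u\in c\Delta\}$. Let $\mathrm{ord}_p(p)=1$, let $E(t)=\exp(\sum_{i\ge0}t^{p^i}/p^i)$, and fix a primitive $p^m$-th root of unity $\zeta$. For $l=1,\dots,m$, $\pi_l$ is the unique root of $\sum_{i\ge0}t^{p^i}/p^i=0$ with $\mathrm{ord}_p\pi_l=\frac1{p^{l-1}(p-1)}$ and $E(\pi_l)=\zeta^{p^{m-l}}$. Define $$\gamma_{i,j}=\sum_{l=0}^{j}\frac{\pi_{m-i}^{p^l}}{p^l}.$$ *)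

theory Defs
  imports "HOL-Analysis.Analysis" "HOL-Computational_Algebra.Formal_Power_Series"
begin

definition valuation :: "('a::field \<Rightarrow> ereal) \<Rightarrow> bool" where
  "valuation v \<longleftrightarrow> (\<forall>x. v x = \<infinity> \<longleftrightarrow> x = 0) \<and> (\<forall>x. v x > -\<infinity>) \<and>
     (\<forall>x y. v (x * y) = v x + v y) \<and> (\<forall>x y. v (x + y) \<ge> min (v x) (v y))"

definition val_sums :: "('a::field \<Rightarrow> ereal) \<Rightarrow> (nat \<Rightarrow> 'a) \<Rightarrow> 'a \<Rightarrow> bool" where
  "val_sums v f s \<longleftrightarrow> (\<forall>B::real. \<forall>\<^sub>F n in sequentially. v ((\<Sum>l<n. f l) - s) \<ge> ereal B)"

text \<open>The series L(t) = sum_{i>=0} t^(p^i)/p^i as a formal power series over Q,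
and the Artin--Hasse exponential E(t) = exp(L(t)).\<close>
definition AH_log :: "nat \<Rightarrow> rat fps" where
  "AH_log p = Abs_fps (\<lambda>k. if \<exists>i. k = p ^ i then 1 / of_nat k else 0)"

definition AH_exp :: "nat \<Rightarrow> rat fps" where
  "AH_exp p = fps_compose (fps_exp 1) (AH_log p)"

definition vec_of :: "int ^ 'n \<Rightarrow> real ^ 'n" where
  "vec_of u = (\<chi> k. real_of_int (u $ k))"

definition Delta :: "nat \<Rightarrow> nat \<Rightarrow> (nat \<Rightarrow> (int ^ 'n) set) \<Rightarrow> (real ^ 'n) set" where
  "Delta p m I = convex hull ({(real p ^ (m - i - 1)) *\<^sub>R vec_of u | i u. i < m \<and> u \<in> I i} \<union> {0})"

definition deg :: "(real ^ 'n) set \<Rightarrow> real ^ 'n \<Rightarrow> real" where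
  "deg D x = Inf {c::real. c \<ge> 0 \<and> x \<in> (\<lambda>y. c *\<^sub>R y) ` D}"

end

theory Submission
  imports Defs
begin


lemma v_mult: "valuation v \<Longrightarrow> v (x*y) = v x + v y" by (simp add: valuation_def)
lemma v_add: "valuation v \<Longrightarrow> v (x+y) \<ge> min (v x) (v y)" by (simp add: valuation_def)
lemma v_zero: "valuation v \<Longrightarrow> v 0 = \<infinity>" by (simp add: valuation_def)
lemma v_fin: "valuation v \<Longrightarrow> x \<noteq> 0 \<Longrightarrow> \<exists>r. v x = ereal r"
proof -
  assume a: "valuation v" "x \<noteq> 0"
  then have "v x \<noteq> \<infinity>" "v x \<noteq> -\<infinity>" unfolding valuation_def by auto
  then show ?thesis by (cases "v x") auto
qed
lemma v_one: "valuation v \<Longrightarrow> v (1::'a::field) = 0"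
proof -
  assume a: "valuation v"
  obtain r where r: "v (1::'a) = ereal r" using v_fin[OF a, of 1] by auto
  have "v (1::'a) = v 1 + v 1" using v_mult[OF a, of 1 1] by simp
  then show ?thesis using r by (simp add: zero_ereal_def)
qed
lemma v_inv: "valuation v \<Longrightarrow> v x = ereal r \<Longrightarrow> v (inverse (x::'a::field)) = ereal (-r)"
proof -
  assume a: "valuation v" and r: "v x = ereal r"
  have "x \<noteq> 0" using r v_zero[OF a] by auto
  then have "inverse x \<noteq> 0" by simp
  then obtain s where s: "v (inverse x) = ereal s" using v_fin[OF a] by blast
  have "v (x * inverse x) = 0" using \<open>x \<noteq> 0\<close> v_one[OF a] by simp
  then have "ereal r + ereal s = 0" using v_mult[OF a, of x "inverse x"] r s by simp
  then show ?thesis using s by (simp add: zero_ereal_def)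
qed
lemma v_pow: "valuation v \<Longrightarrow> v x = ereal r \<Longrightarrow> v ((x::'a::field) ^ n) = ereal (real n * r)"
proof (induction n)
  case 0 then show ?case using v_one by (simp add: zero_ereal_def)
next
  case (Suc n) then show ?case using v_mult[OF Suc.prems(1), of x "x^n"] by (simp add: algebra_simps)
qed
lemma v_neg: "valuation v \<Longrightarrow> v (- (x::'a::field)) = v x"
proof -
  assume a: "valuation v"
  obtain r where r: "v (-1::'a) = ereal r" using v_fin[OF a, of "-1"] by auto
  have "v ((-1::'a) * (-1)) = 0" using v_one[OF a] by simp
  then have "ereal r + ereal r = 0" using v_mult[OF a, of "-1::'a" "-1"] r by simp
  then have "v (-1::'a) = 0" using r by (simp add: zero_ereal_def)
  then show ?thesis using v_mult[OF a, of "-1" x] by simp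
qed
lemma v_sum: assumes a: "valuation v" and "finite A" and "\<And>l. l \<in> A \<Longrightarrow> v (f l) \<ge> B" shows "v (\<Sum>l\<in>A. (f l::'a::field)) \<ge> B"
  using assms(2,3)
proof (induction A rule: finite_induct)
  case empty then show ?case using v_zero[OF a] by simp
next
  case (insert x F)
  have "v (f x + sum f F) \<ge> min (v (f x)) (v (sum f F))" using v_add[OF a] .
  moreover have "min (v (f x)) (v (sum f F)) \<ge> B" using insert by auto
  ultimately show ?case using insert by (metis order_trans sum.insert)
qed


theorem lemma3p7:
  fixes p m i j :: nat
    and I :: "nat \<Rightarrow> (int ^ 'n) set"
    and u :: "int ^ 'n"
    and ord :: "'a::field_char_0 \<Rightarrow> ereal"
    and \<zeta> :: 'a
    and \<pi> :: "nat \<Rightarrow> 'a"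
  assumes p: "prime p"
    and m: "m \<ge> 1"
    and fin: "\<And>k. k < m \<Longrightarrow> finite (I k)"
    and full: "aff_dim (Delta p m I) = int CARD('n)"
    and val: "valuation ord"
    and ordp: "ord (of_nat p) = 1"
    and zeta: "\<zeta> ^ (p ^ m) = 1" "\<And>k. 0 < k \<Longrightarrow> k < p ^ m \<Longrightarrow> \<zeta> ^ k \<noteq> 1"
    and pi_root: "\<And>l. 1 \<le> l \<Longrightarrow> l \<le> m \<Longrightarrow>
                    val_sums ord (\<lambda>k. \<pi> l ^ (p ^ k) / of_nat (p ^ k)) 0"
    and pi_ord: "\<And>l. 1 \<le> l \<Longrightarrow> l \<le> m \<Longrightarrow>
                    ord (\<pi> l) = ereal (1 / (real p ^ (l - 1) * (real p - 1)))"
    and pi_E: "\<And>l. 1 \<le> l \<Longrightarrow> l \<le> m \<Longrightarrow>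
                    val_sums ord (\<lambda>k. of_rat (fps_nth (AH_exp p) k) * \<pi> l ^ k) (\<zeta> ^ (p ^ (m - l)))"
    and i: "i \<le> m - 1"
    and u: "u \<in> I i"
    and j: "j \<ge> m - i"
  shows "ord (of_nat p ^ j * (\<Sum>l = 0..j. \<pi> (m - i) ^ (p ^ l) / of_nat (p ^ l)))
           - ereal (deg (Delta p m I) ((real p ^ j) *\<^sub>R vec_of u) / (real p - 1))
         \<ge> ereal (real p ^ (j - (m - i) + 1) - 1)"
  
proof -
  define k where "k = m - i"
  have k1: "1 \<le> k" "k \<le> m" using i m unfolding k_def by auto
  have jk: "k \<le> j" using j k_def by simp
  define q where "q = real p"
  have p2: "p \<ge> 2" using p prime_ge_2_nat by blast
  have q2: "q \<ge> 2" using p2 q_def by simp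
  define a where "a = 1 / (q ^ (k - 1) * (q - 1))"
  define t where "t = (\<lambda>l. \<pi> k ^ (p ^ l) / (of_nat (p ^ l) :: 'a))"
  have opi: "ord (\<pi> k) = ereal a" using pi_ord[OF k1] unfolding a_def q_def .
  have ot: "ord (t l) = ereal (q ^ l * a - l)" for l
  proof -
    have "ord (of_nat (p ^ l) :: 'a) = ereal (real l * 1)"
      using v_pow[OF val ordp[unfolded one_ereal_def], of l] by simp
    then have "ord (inverse (of_nat (p ^ l) :: 'a)) = ereal (- real l)"
      using v_inv[OF val] by simp
    moreover have "ord (\<pi> k ^ (p ^ l)) = ereal (real (p ^ l) * a)" using v_pow[OF val opi] .
    ultimately show ?thesis unfolding t_def divide_inverse using v_mult[OF val]
      by (simp add: q_def)
  qed
  define h where "h = (\<lambda>d::nat. q ^ d / (q - 1) - d)"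
  have hmono: "h d0 \<le> h (d0 + e)" for d0 e
  proof (induction e)
    case 0 then show ?case by simp
  next
    case (Suc e)
    have "h (d0 + e) \<le> h (d0 + Suc e)"
    proof -
      have "q ^ (d0 + e) \<ge> 1" using q2 by simp
      moreover have "q ^ (d0 + Suc e) / (q - 1) = q ^ (d0 + e) / (q - 1) + q ^ (d0 + e)"
        using q2 by (simp add: field_simps)
      ultimately show ?thesis unfolding h_def by simp
    qed
    then show ?case using Suc by simp
  qed
  have th: "q ^ l * a - l = h (l - (k - 1)) - (k - 1)" if "l \<ge> k - 1" for l
  proof -
    have "q ^ l = q ^ (l - (k - 1)) * q ^ (k - 1)" using that by (simp add: power_add[symmetric])
    then show ?thesis unfolding a_def h_def using q2 that by (simp add: field_simps of_nat_diff)
  qed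
  define M where "M = q ^ (j + 1) * a - (j + 1)"
  have tb: "ord (t l) \<ge> ereal M" if "l \<ge> j + 1" for l
  proof -
    have "h (j + 1 - (k - 1)) \<le> h (l - (k - 1))"
      using hmono[of "j + 1 - (k - 1)" "l - j - 1"] that jk by simp
    then have "q ^ (j + 1) * a - real (j + 1) \<le> q ^ l * a - l"
      using th[of l] th[of "j+1"] that jk by simp
    then show ?thesis unfolding ot M_def by simp
  qed
  define g where "g = (\<Sum>l = 0..j. \<pi> (m - i) ^ (p ^ l) / of_nat (p ^ l) :: 'a)"
  have g_t: "g = (\<Sum>l = 0..j. t l)" unfolding g_def t_def k_def ..
  obtain N where N: "\<And>n. n \<ge> N \<Longrightarrow> ord ((\<Sum>l<n. t l) - 0) \<ge> ereal M"
    using pi_root[OF k1] unfolding val_sums_def t_def eventually_sequentially by blast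
  define n where "n = max N (j + 1)"
  have Sn: "(\<Sum>l<n. t l) = g + (\<Sum>l = j + 1..<n. t l)"
  proof -
    have "(\<Sum>l<n. t l) = (\<Sum>l = 0..<n. t l)" by (simp add: lessThan_atLeast0)
    also have "\<dots> = (\<Sum>l = 0..<j+1. t l) + (\<Sum>l = j + 1..<n. t l)"
      by (rule sum.atLeastLessThan_concat[symmetric]) (auto simp: n_def)
    also have "(\<Sum>l = 0..<j+1. t l) = g" unfolding g_t
      by (simp add: atLeastLessThanSuc_atLeastAtMost)
    finally show ?thesis .
  qed
  have og: "ord g \<ge> ereal M"
  proof -
    have "ord (\<Sum>l<n. t l) \<ge> ereal M" using N[of n] by (simp add: n_def)
    moreover have "ord (- (\<Sum>l = j + 1..<n. t l)) \<ge> ereal M"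
      unfolding v_neg[OF val] by (rule v_sum[OF val]) (auto intro: tb)
    moreover have "g = (\<Sum>l<n. t l) + - (\<Sum>l = j + 1..<n. t l)" using Sn by simp
    ultimately show ?thesis using v_add[OF val, of "\<Sum>l<n. t l" "- (\<Sum>l = j + 1..<n. t l)"]
      by (metis min.bounded_iff order_trans)
  qed
  have opj: "ord (of_nat p ^ j :: 'a) = ereal (real j * 1)"
    using v_pow[OF val ordp[unfolded one_ereal_def], of j] by simp
  have X: "ord (of_nat p ^ j * g) \<ge> ereal (j + M)"
  proof -
    have "ord (of_nat p ^ j * g) = ereal j + ord g" using v_mult[OF val] opj by simp
    moreover have "ereal j + ord g \<ge> ereal j + ereal M" using og by (rule add_left_mono)
    ultimately show ?thesis by simp
  qed
  define D where "D = Delta p m I"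
  define e where "e = j - k + 1"
  have deg_le: "deg D ((q ^ j) *\<^sub>R vec_of u) \<le> q ^ e"
  proof -
    have y: "(q ^ (k - 1)) *\<^sub>R vec_of u \<in> D"
      unfolding D_def Delta_def q_def
      apply (rule hull_inc, rule UnI1, rule CollectI, rule exI[of _ i], rule exI[of _ u])
      using i m u k_def by (auto simp: diff_diff_add)
    have "q ^ e *\<^sub>R ((q ^ (k - 1)) *\<^sub>R vec_of u) = (q ^ j) *\<^sub>R vec_of u"
    proof -
      have "e + (k - 1) = j" using jk k1 by (simp add: e_def)
      then have "q ^ e * q ^ (k - 1) = q ^ j" by (metis power_add)
      then show ?thesis by simp
    qed
    then have "q ^ e \<in> {c::real. c \<ge> 0 \<and> (q ^ j) *\<^sub>R vec_of u \<in> (\<lambda>y. c *\<^sub>R y) ` D}"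
      using y q2 by (auto intro!: image_eqI[where x="(q ^ (k - 1)) *\<^sub>R vec_of u"])
    then show ?thesis unfolding deg_def by (rule cInf_lower) (auto intro: bdd_belowI[where m=0])
  qed
  have Mval: "real j + M = q ^ (e + 1) / (q - 1) - 1"
  proof -
    have "(e + 1) + (k - 1) = j + 1" using jk k1 by (simp add: e_def)
    then have "q ^ (j + 1) = q ^ (e + 1) * q ^ (k - 1)" by (metis power_add)
    then show ?thesis unfolding M_def a_def using q2 by (simp add: field_simps)
  qed
  have fin_ineq: "real j + M - deg D ((q ^ j) *\<^sub>R vec_of u) / (q - 1) \<ge> q ^ e - 1"
  proof -
    have "deg D ((q ^ j) *\<^sub>R vec_of u) / (q - 1) \<le> q ^ e / (q - 1)"
      using deg_le q2 by (simp add: divide_right_mono)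
    moreover have "q ^ (e + 1) / (q - 1) - q ^ e / (q - 1) = q ^ e"
    proof -
      have "q ^ (e + 1) / (q - 1) - q ^ e / (q - 1) = (q ^ (e + 1) - q ^ e) / (q - 1)"
        by (simp add: diff_divide_distrib)
      also have "q ^ (e + 1) - q ^ e = q ^ e * (q - 1)" by (simp add: algebra_simps)
      finally show ?thesis using q2 by simp
    qed
    ultimately show ?thesis unfolding Mval by linarith
  qed
  have ee: "j - (m - i) + 1 = e" unfolding e_def k_def ..
  show ?thesis
    unfolding g_def[symmetric] D_def[symmetric] q_def[symmetric] ee
  proof (cases "ord (of_nat p ^ j * g)")
    case (real r)
    then show "ereal (q ^ e - 1) \<le> ord (of_nat p ^ j * g) - ereal (deg D (q ^ j *\<^sub>R vec_of u) / (q - 1))"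
      using X fin_ineq by simp
  next
    case PInf then show "ereal (q ^ e - 1) \<le> ord (of_nat p ^ j * g) - ereal (deg D (q ^ j *\<^sub>R vec_of u) / (q - 1))" by simp
  next
    case MInf then show "ereal (q ^ e - 1) \<le> ord (of_nat p ^ j * g) - ereal (deg D (q ^ j *\<^sub>R vec_of u) / (q - 1))" using X by simp
  qed
qed

end
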